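(* Let $\bar p_{ij}>0$ ($i\in N=\{1,\dots,n\}$, $j\in M=\{1,\dots,m\}$) be given positive numbers. For a vector $f\in\mathbb{R}^n$ with positive components define $$\rho(f):=\frac{\max_{i\in N,j\in M}\bar p_{ij}/f_i}{\min_{i\in N,j\in M}\bar p_{ij}/f_i}.$$ Let $p^H_i:=\max_{j\in M}\bar p_{ij}$, $p^L_i:=\min_{j\in M}\bar p_{ij}$, $\rho_i:=p^H_i/p^L_i$, $\rho^*:=\max_{i\in N}\rho_i$, and $f^*_i:=\sqrt{p^L_ip^H_i}$. Then $\rho(f)\ge\rho^*$ for every positive vector $f$, and $\rho(f^* )=\rho^*$.
   Context: In the paper, $\bar p_{ij}$ is the optimal price of product $i$ for customer type $j$ under personalized pricing, and $\rho(f)=q_{\max}/q_{\min}$ determines the performance guarantee $1+\ln\rho(f)$ of pricing along the vector $f$; $f^*$ is called the robust factor. *)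

theory Defs
  imports Complex_Main
begin

text \<open>Products indexed by N = {1..n}, customer types by M = {1..m}; pbar i j is the
  personalized optimal price. Vectors f are functions nat => real (only values on N matter).\<close>

definition rho :: "nat \<Rightarrow> nat \<Rightarrow> (nat \<Rightarrow> nat \<Rightarrow> real) \<Rightarrow> (nat \<Rightarrow> real) \<Rightarrow> real" where
  "rho n m pbar f =
     (Max {pbar i j / f i | i j. i \<in> {1..n} \<and> j \<in> {1..m}}) /
     (Min {pbar i j / f i | i j. i \<in> {1..n} \<and> j \<in> {1..m}})"

definition pH :: "nat \<Rightarrow> (nat \<Rightarrow> nat \<Rightarrow> real) \<Rightarrow> nat \<Rightarrow> real" where
  "pH m pbar i = Max ((\<lambda>j. pbar i j) ` {1..m})"

definition pL :: "nat \<Rightarrow> (nat \<Rightarrow> nat \<Rightarrow> real) \<Rightarrow> nat \<Rightarrow> real" where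
  "pL m pbar i = Min ((\<lambda>j. pbar i j) ` {1..m})"

definition rho_i :: "nat \<Rightarrow> (nat \<Rightarrow> nat \<Rightarrow> real) \<Rightarrow> nat \<Rightarrow> real" where
  "rho_i m pbar i = pH m pbar i / pL m pbar i"

definition rho_star :: "nat \<Rightarrow> nat \<Rightarrow> (nat \<Rightarrow> nat \<Rightarrow> real) \<Rightarrow> real" where
  "rho_star n m pbar = Max ((\<lambda>i. rho_i m pbar i) ` {1..n})"

definition f_star :: "nat \<Rightarrow> (nat \<Rightarrow> nat \<Rightarrow> real) \<Rightarrow> nat \<Rightarrow> real" where
  "f_star m pbar i = sqrt (pL m pbar i * pH m pbar i)"

end

theory Submission
  imports Defs
begin

lemma S_eq: "{pbar i j / f i | i j. i \<in> {1..n} \<and> j \<in> {1..m}} =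
   (\<lambda>(i,j). pbar i j / f i) ` ({1..n::nat} \<times> {1..m::nat})"
  by force

lemma pHL:
  fixes pbar :: "nat \<Rightarrow> nat \<Rightarrow> real"
  assumes "m \<ge> 1" and pos: "\<And>j. j \<in> {1..m} \<Longrightarrow> pbar i j > 0"
  shows "\<exists>j\<in>{1..m}. pH m pbar i = pbar i j" "\<exists>j\<in>{1..m}. pL m pbar i = pbar i j"
    "\<And>j. j \<in> {1..m} \<Longrightarrow> pL m pbar i \<le> pbar i j"
    "\<And>j. j \<in> {1..m} \<Longrightarrow> pbar i j \<le> pH m pbar i"
    "pL m pbar i > 0" "pH m pbar i > 0"
proof -
  have ne: "(\<lambda>j. pbar i j) ` {1..m} \<noteq> {}" using assms by auto
  show 1: "\<exists>j\<in>{1..m}. pH m pbar i = pbar i j"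
    using Max_in[OF _ ne] unfolding pH_def by auto
  show 2: "\<exists>j\<in>{1..m}. pL m pbar i = pbar i j"
    using Min_in[OF _ ne] unfolding pL_def by auto
  show "\<And>j. j \<in> {1..m} \<Longrightarrow> pL m pbar i \<le> pbar i j" unfolding pL_def by auto
  show "\<And>j. j \<in> {1..m} \<Longrightarrow> pbar i j \<le> pH m pbar i" unfolding pH_def by auto
  show "pL m pbar i > 0" using 2 pos by auto
  show "pH m pbar i > 0" using 1 pos by auto
qed

theorem theorem2:
  fixes n m :: nat and pbar :: "nat \<Rightarrow> nat \<Rightarrow> real"
  assumes "n \<ge> 1" and "m \<ge> 1"
    and "\<And>i j. i \<in> {1..n} \<Longrightarrow> j \<in> {1..m} \<Longrightarrow> pbar i j > 0"
  shows "(\<forall>f. (\<forall>i\<in>{1..n}. f i > 0) \<longrightarrow> rho n m pbar f \<ge> rho_star n m pbar)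
    \<and> rho n m pbar (f_star m pbar) = rho_star n m pbar"
proof -
  have H1: "\<exists>j\<in>{1..m}. pH m pbar i = pbar i j" "\<exists>j\<in>{1..m}. pL m pbar i = pbar i j"
    "\<And>j. j \<in> {1..m} \<Longrightarrow> pL m pbar i \<le> pbar i j"
    "\<And>j. j \<in> {1..m} \<Longrightarrow> pbar i j \<le> pH m pbar i"
    "pL m pbar i > 0" "pH m pbar i > 0" if "i \<in> {1..n}" for i
  proof -
    have pos: "\<And>j. j \<in> {1..m} \<Longrightarrow> pbar i j > 0" using assms(3) that by blast
    note P = pHL[where pbar=pbar and i=i and m=m, OF assms(2) pos]
    show "\<exists>j\<in>{1..m}. pH m pbar i = pbar i j" by (rule P(1))
    show "\<exists>j\<in>{1..m}. pL m pbar i = pbar i j" by (rule P(2))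
    show "\<And>j. j \<in> {1..m} \<Longrightarrow> pL m pbar i \<le> pbar i j" by (rule P(3))
    show "\<And>j. j \<in> {1..m} \<Longrightarrow> pbar i j \<le> pH m pbar i" by (rule P(4))
    show "pL m pbar i > 0" by (rule P(5))
    show "pH m pbar i > 0" by (rule P(6))
  qed
  note H = H1
  define S where "S f = (\<lambda>(i,j). pbar i j / f i) ` ({1..n::nat} \<times> {1..m::nat})" for f
  have rho_eq: "rho n m pbar f = Max (S f) / Min (S f)" for f
    unfolding rho_def S_def S_eq ..
  have fin: "finite (S f)" for f unfolding S_def by auto
  have ne: "S f \<noteq> {}" for f unfolding S_def using assms(1,2) by auto
  have memS: "pbar i j / f i \<in> S f" if "i \<in> {1..n}" "j \<in> {1..m}" for i j f
    unfolding S_def using that by force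
  have Spos: "x > 0" if "x \<in> S f" "\<forall>i\<in>{1..n}. f i > 0" for x f
    using that assms(3) unfolding S_def by auto
  have ne2: "(\<lambda>i. rho_i m pbar i) ` {1..n} \<noteq> {}" using assms(1) by auto
  obtain k where k: "k \<in> {1..n}" "rho_star n m pbar = rho_i m pbar k"
    using Max_in[OF _ ne2] unfolding rho_star_def by auto
  have rile: "rho_i m pbar i \<le> rho_star n m pbar" if "i \<in> {1..n}" for i
    unfolding rho_star_def using that by auto
  have part1: "rho n m pbar f \<ge> rho_star n m pbar" if fp: "\<forall>i\<in>{1..n}. f i > 0" for f
  proof -
    obtain j1 where j1: "j1 \<in> {1..m}" "pH m pbar k = pbar k j1" using H(1)[of k] k(1) by auto
    obtain j2 where j2: "j2 \<in> {1..m}" "pL m pbar k = pbar k j2" using H(2)[of k] k(1) by auto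
    have a: "pH m pbar k / f k \<le> Max (S f)" using j1 memS[OF k(1) j1(1)] fin by auto
    have b: "Min (S f) \<le> pL m pbar k / f k" using j2 memS[OF k(1) j2(1)] fin by auto
    have mp: "Min (S f) > 0" using Spos[OF Min_in[OF fin ne] fp] .
    have fk: "f k > 0" using fp k by auto
    have pl: "pL m pbar k > 0" using H(5) k(1) by auto
    have "rho_star n m pbar = (pH m pbar k / f k) / (pL m pbar k / f k)"
      using k fk unfolding rho_i_def by simp
    also have "\<dots> \<le> Max (S f) / Min (S f)"
    proof -
      have "0 < pH m pbar k / f k" using H(6)[OF k(1)] fk by simp
      then have "0 \<le> Max (S f)" using a by linarith
      then show ?thesis using a b mp by (intro frac_le) auto
    qed
    finally show ?thesis unfolding rho_eq .
  qed
  define fs where "fs = f_star m pbar"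
  define R where "R = rho_star n m pbar"
  have fspos: "\<forall>i\<in>{1..n}. fs i > 0" unfolding fs_def f_star_def using H(5,6) by auto
  have up: "x \<le> sqrt R" and lo: "1 / sqrt R \<le> x" if xS: "x \<in> S fs" for x
  proof -
    obtain i j where ij: "i \<in> {1..n}" "j \<in> {1..m}" "x = pbar i j / fs i"
      using xS unfolding S_def by force
    define L where "L = pL m pbar i"
    define U where "U = pH m pbar i"
    have L: "L > 0" "L \<le> pbar i j" using H(3,5) ij unfolding L_def by auto
    have U: "U > 0" "pbar i j \<le> U" using H(4,6) ij unfolding U_def by auto
    have ri: "U / L \<le> R" using rile[OF ij(1)] unfolding R_def rho_i_def L_def U_def .
    have fsi: "fs i = sqrt L * sqrt U" unfolding fs_def f_star_def L_def U_def real_sqrt_mult ..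
    have sL: "sqrt L > 0" "sqrt U > 0" using L U by auto
    have "x \<le> U / (sqrt L * sqrt U)" unfolding ij(3) fsi using U sL
      by (simp add: divide_right_mono)
    also have "\<dots> = sqrt (U / L)"
    proof -
      have "U = sqrt U * sqrt U" using U by simp
      then have "U / (sqrt L * sqrt U) = sqrt U / sqrt L" using sL
        by (metis mult.commute nonzero_mult_divide_mult_cancel_left order_less_irrefl)
      then show ?thesis by (simp add: real_sqrt_divide)
    qed
    also have "\<dots> \<le> sqrt R" using ri by simp
    finally show "x \<le> sqrt R" .
    have ul: "U / L > 0" using L U by simp
    have "1 / sqrt R \<le> 1 / sqrt (U / L)" using ri ul
      by (intro divide_left_mono) auto
    also have "\<dots> = L / (sqrt L * sqrt U)"
    proof -
      have "L = sqrt L * sqrt L" using L by simp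
      then have "L / (sqrt L * sqrt U) = sqrt L / sqrt U" using sL
        by (metis nonzero_mult_divide_mult_cancel_left order_less_irrefl)
      then show ?thesis by (simp add: real_sqrt_divide)
    qed
    also have "\<dots> \<le> x" unfolding ij(3) fsi using L sL
      by (simp add: divide_right_mono)
    finally show "1 / sqrt R \<le> x" .
  qed
  have Rpos: "R > 0" unfolding R_def k(2) rho_i_def using H(5,6) k(1) by auto
  have Mx: "Max (S fs) \<le> sqrt R" using up Max_in[OF fin ne] by auto
  have Mn: "1 / sqrt R \<le> Min (S fs)" using lo Min_in[OF fin ne] by auto
  have mp: "Min (S fs) > 0" using Spos[OF Min_in[OF fin ne] fspos] .
  have "Max (S fs) / Min (S fs) \<le> sqrt R / (1 / sqrt R)"
    using Mx Mn mp Rpos Spos[OF Max_in[OF fin ne] fspos]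
    by (intro frac_le) auto
  also have "\<dots> = R" using Rpos by simp
  finally have "rho n m pbar fs \<le> R" unfolding rho_eq .
  with part1[OF fspos] show ?thesis using part1 unfolding fs_def R_def by auto
qed

end
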